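(* Let $n\ge 2$ and let $x=(x_1,\dots,x_n)$, $y=(y_1,\dots,y_n)$, $w=(w_1,\dots,w_n)$ be three bases of the free group $F_n$. Suppose there exists $v\in F_n$ such that $x_i=vw_iv^{-1}$ for all $i\in\{1,\dots,n\}$. Then $|v|_y\le |w|_y^2\,|y|_x$.
   Context: For a basis $x$ of $F_n$ and $u\in F_n$, $|u|_x$ denotes the length of the reduced word representing $u$ in the basis $x$. For two bases $x,y$ of $F_n$, $|y|_x=\max_i |y_i|_x$ is the maximal length of an element of $y$ written in the basis $x$. *)

theory Defs
  imports Main
begin

text \<open>The free group F_n is modelled concretely as the set of freely reduced
words over the letters (i, e) with i < n; e = False means the generator a_i,
e = True means its inverse.\<close>

type_synonym letter = "nat \<times> bool"
type_synonym word = "letter list"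

definition inv_letter :: "letter \<Rightarrow> letter" where
  "inv_letter a = (fst a, \<not> snd a)"

fun reduced :: "word \<Rightarrow> bool" where
  "reduced (a # b # w) = (b \<noteq> inv_letter a \<and> reduced (b # w))"
| "reduced _ = True"

fun cons_red :: "letter \<Rightarrow> word \<Rightarrow> word" where
  "cons_red a [] = [a]"
| "cons_red a (b # w) = (if b = inv_letter a then w else a # b # w)"

definition fmult :: "word \<Rightarrow> word \<Rightarrow> word" where
  "fmult u v = foldr cons_red u v"

definition finv :: "word \<Rightarrow> word" where
  "finv u = rev (map inv_letter u)"

definition F :: "nat \<Rightarrow> word set" where
  "F n = {w. reduced w \<and> (\<forall>a\<in>set w. fst a < n)}"

fun eval :: "(nat \<Rightarrow> word) \<Rightarrow> word \<Rightarrow> word" where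
  "eval y [] = []"
| "eval y (a # w) = fmult (if snd a then finv (y (fst a)) else y (fst a)) (eval y w)"

text \<open>y is a basis of F_n iff the endomorphism a_i \<mapsto> y_i is an automorphism.\<close>
definition basis :: "nat \<Rightarrow> (nat \<Rightarrow> word) \<Rightarrow> bool" where
  "basis n y \<longleftrightarrow> (\<forall>i<n. y i \<in> F n) \<and> bij_betw (eval y) (F n) (F n)"

definition wlen :: "nat \<Rightarrow> (nat \<Rightarrow> word) \<Rightarrow> word \<Rightarrow> nat" where
  "wlen n y u = length (THE w. w \<in> F n \<and> eval y w = u)"

definition blen :: "nat \<Rightarrow> (nat \<Rightarrow> word) \<Rightarrow> (nat \<Rightarrow> word) \<Rightarrow> nat" where
  "blen n y z = Max {wlen n y (z i) | i. i < n}"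

end

theory Submission
  imports Defs
begin


definition red :: "word \<Rightarrow> word" where "red p = foldr cons_red p []"

lemma inv_inv[simp]: "inv_letter (inv_letter a) = a"
  by (simp add: inv_letter_def)

lemma inv_neq[simp]: "inv_letter a \<noteq> a"
  by (cases a) (simp add: inv_letter_def)

lemma fst_inv[simp]: "fst (inv_letter a) = fst a"
  by (simp add: inv_letter_def)

lemma reduced_tl: "reduced (b # w) \<Longrightarrow> reduced w"
  by (cases w) auto

lemma reduced_cons_red: "reduced w \<Longrightarrow> reduced (cons_red a w)"
  by (cases w) (auto dest: reduced_tl)

lemma reduced_foldr: "reduced w \<Longrightarrow> reduced (foldr cons_red p w)"
  by (induction p) (auto intro: reduced_cons_red)

lemma reduced_red: "reduced (red p)"
  unfolding red_def by (rule reduced_foldr) simp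

lemma red_reduced: "reduced w \<Longrightarrow> red w = w"
proof (induction w rule: reduced.induct)
  case (1 a b w)
  then show ?case by (auto simp: red_def)
qed (auto simp: red_def)

lemma red_Nil[simp]: "red [] = []" by (simp add: red_def)
lemma red_Cons: "red (a # p) = cons_red a (red p)" by (simp add: red_def)

lemma cancel: "reduced z \<Longrightarrow> cons_red a (cons_red (inv_letter a) z) = z"
proof (cases z)
  case Nil then show ?thesis by simp
next
  case (Cons b w)
  assume r: "reduced z"
  show ?thesis
  proof (cases "b = a")
    case True
    then show ?thesis using Cons r by (cases w) auto
  next
    case False
    then show ?thesis using Cons by auto
  qed
qed

lemma foldr_cons_red: "reduced w \<Longrightarrow>
   foldr cons_red (cons_red a r) w = cons_red a (foldr cons_red r w)"
proof (cases r)
  case (Cons b r')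
  assume w: "reduced w"
  show ?thesis
  proof (cases "b = inv_letter a")
    case True
    then show ?thesis using Cons cancel[OF reduced_foldr[OF w, of r'], of a] by simp
  qed (use Cons in simp)
qed simp

lemma foldr_red: "reduced w \<Longrightarrow> foldr cons_red (red p) w = foldr cons_red p w"
  by (induction p) (simp_all add: red_Cons foldr_cons_red)

lemma red_app: "red (p @ q) = foldr cons_red p (red q)"
  by (simp add: red_def)

lemma red_left: "red (red p @ q) = red (p @ q)"
  by (simp add: red_app foldr_red reduced_red)

lemma red_right: "red (p @ red q) = red (p @ q)"
  by (simp add: red_app red_reduced reduced_red)

lemma red_mid: "red (a @ red b @ c) = red (a @ b @ c)"
  by (metis red_app red_left)

lemma red_idem[simp]: "red (red p) = red p"
  by (simp add: red_reduced reduced_red)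

lemma finv_Cons: "finv (a # p) = finv p @ [inv_letter a]"
  by (simp add: finv_def)
lemma finv_Nil[simp]: "finv [] = []" by (simp add: finv_def)
lemma finv_append: "finv (p @ q) = finv q @ finv p" by (simp add: finv_def)
lemma finv_finv[simp]: "finv (finv p) = p" by (simp add: finv_def rev_map comp_def)
lemma length_finv[simp]: "length (finv p) = length p" by (simp add: finv_def)

lemma red_finv_right: "red (p @ finv p) = []"
proof (induction p)
  case (Cons a p)
  have "red (p @ finv p @ [inv_letter a]) = [inv_letter a]"
    using red_left[of "p @ finv p" "[inv_letter a]"] Cons by (simp add: red_Cons)
  then show ?case by (simp add: finv_Cons red_Cons)
qed simp

lemma red_finv_left: "red (finv p @ p) = []"
  using red_finv_right[of "finv p"] by simp

lemma red_cons_red: "red (cons_red c z) = red (c # z)"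
proof (cases z)
  case (Cons b w)
  then show ?thesis
    by (cases "b = inv_letter c") (auto simp: red_Cons cancel reduced_red)
qed (simp add: red_Cons)

lemma red_foldr: "red (foldr cons_red a b) = red (a @ b)"
proof (induction a)
  case (Cons x a)
  have "red (foldr cons_red (x # a) b) = red (x # foldr cons_red a b)"
    by (simp add: red_cons_red)
  also have "\<dots> = red ([x] @ red (foldr cons_red a b))" using red_right[of "[x]"] by simp
  also have "\<dots> = red ([x] @ (a @ b))" using Cons red_right[of "[x]"] by simp
  finally show ?case by simp
qed simp

lemma red_fmult: "red (fmult a b) = red (a @ b)"
  by (simp add: fmult_def red_foldr)

lemma red_finv_red: "red (finv (red q)) = red (finv q)"
proof -
  have "red (finv q) = red (finv q @ red (red q @ finv (red q)))"
    using red_finv_right[of "red q"] by simp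
  also have "\<dots> = red (finv q @ red q @ finv (red q))" by (simp add: red_right)
  also have "\<dots> = red (red (finv q @ red q) @ finv (red q))" by (simp add: red_left)
  also have "red (finv q @ red q) = []"
    using red_right[of "finv q" q] red_finv_left by simp
  finally show ?thesis by simp
qed

lemma red_both: "red (p @ q) = red (red p @ red q)"
  by (simp add: red_left red_right)

definition img :: "(nat \<Rightarrow> word) \<Rightarrow> letter \<Rightarrow> word" where
  "img y a = (if snd a then finv (y (fst a)) else y (fst a))"

definition E :: "(nat \<Rightarrow> word) \<Rightarrow> word \<Rightarrow> word" where
  "E y p = concat (map (img y) p)"

lemma E_Nil[simp]: "E y [] = []" by (simp add: E_def)
lemma E_Cons: "E y (a # p) = img y a @ E y p" by (simp add: E_def)
lemma E_append: "E y (p @ q) = E y p @ E y q" by (simp add: E_def)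

lemma eval_E: "eval y p = red (E y p)"
proof (induction p)
  case (Cons a p)
  then show ?case by (simp add: E_Cons fmult_def red_app img_def)
qed simp

lemma img_inv: "img y (inv_letter a) = finv (img y a)"
  by (simp add: img_def inv_letter_def)

lemma E_finv: "E y (finv p) = finv (E y p)"
  by (induction p) (simp_all add: finv_Cons E_append E_Cons img_inv finv_append)

lemma red_E_cons_red: "red (E y (cons_red a r)) = red (img y a @ E y r)"
proof (cases r)
  case (Cons b r')
  show ?thesis
  proof (cases "b = inv_letter a")
    case True
    have "red (img y a @ E y r) = red (img y a @ finv (img y a) @ E y r')"
      using Cons True by (simp add: E_Cons img_inv)
    also have "\<dots> = red (red (img y a @ finv (img y a)) @ E y r')"
      by (simp add: red_left)
    finally show ?thesis using Cons True by (simp add: red_finv_right)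
  qed (use Cons in \<open>simp add: E_Cons\<close>)
qed (simp add: E_Cons)

lemma red_E_red: "red (E y (red p)) = red (E y p)"
proof (induction p)
  case (Cons a p)
  have "red (E y (red (a # p))) = red (img y a @ E y (red p))"
    by (simp add: red_Cons red_E_cons_red)
  also have "\<dots> = red (img y a @ red (E y (red p)))" by (simp add: red_right)
  also have "\<dots> = red (img y a @ E y p)" using Cons by (simp add: red_right)
  finally show ?case by (simp add: E_Cons)
qed simp

lemma eval_red: "eval y (red p) = eval y p"
  by (simp add: eval_E red_E_red)

lemma red_img_resp: "red (z (fst a)) = red (z' (fst a)) \<Longrightarrow> red (img z a) = red (img z' a)"
  by (metis img_def red_finv_red)

lemma E_resp: "(\<forall>a \<in> set p. red (z (fst a)) = red (z' (fst a))) \<Longrightarrow> red (E z p) = red (E z' p)"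
proof (induction p)
  case (Cons a p)
  then show ?case
    by (simp add: E_Cons) (metis red_both red_img_resp)
qed simp

lemma E_comp: "E y (E z p) = E (\<lambda>j. E y (z j)) p"
proof (induction p)
  case (Cons a p)
  then show ?case by (simp add: E_Cons E_append img_def E_finv)
qed simp

lemma E_conj: "red (E (\<lambda>j. c @ z j @ finv c) p) = red (c @ E z p @ finv c)"
proof (induction p)
  case Nil then show ?case by (simp add: red_finv_right)
next
  case (Cons a p)
  have im: "img (\<lambda>j. c @ z j @ finv c) a = c @ img z a @ finv c"
    by (simp add: img_def finv_append)
  have "red (E (\<lambda>j. c @ z j @ finv c) (a # p)) = red ((c @ img z a @ finv c) @ red (E (\<lambda>j. c @ z j @ finv c) p))"
    by (subst red_right) (simp add: E_Cons im)
  also have "\<dots> = red ((c @ img z a) @ (finv c @ c) @ E z p @ finv c)"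
    using Cons red_right[of "c @ img z a @ finv c" "c @ E z p @ finv c"] by simp
  also have "\<dots> = red ((c @ img z a) @ red (finv c @ c) @ E z p @ finv c)"
    by (simp only: red_mid)
  also have "\<dots> = red (c @ E z (a # p) @ finv c)"
    by (simp add: red_finv_left E_Cons)
  finally show ?case .
qed

lemma length_red: "length (red p) \<le> length p"
proof (induction p)
  case (Cons a p)
  have "length (cons_red a r) \<le> Suc (length r)" for r
    by (cases r) auto
  then show ?case using Cons by (simp add: red_Cons) (meson le_trans not_less_eq_eq)
qed simp

lemma set_cons_red: "set (cons_red a r) \<subseteq> insert a (set r)"
  by (cases r) auto

lemma set_red: "set (red p) \<subseteq> set p"
proof (induction p)
  case (Cons a p)
  then show ?case using set_cons_red[of a "red p"] by (auto simp: red_Cons)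
qed simp



lemma reduced_app: "reduced (p @ [a]) \<Longrightarrow> reduced (a # q) \<Longrightarrow> reduced (p @ a # q)"
proof (induction p)
  case (Cons x p)
  then show ?case
    by (cases p) (auto dest: reduced_tl)
qed simp

lemma reduced_finv: "reduced p \<Longrightarrow> reduced (finv p)"
proof (induction p rule: reduced.induct)
  case (1 a b w)
  have "reduced (finv w @ inv_letter b # [inv_letter a])"
  proof (rule reduced_app)
    show "reduced (finv w @ [inv_letter b])" using 1 by (simp add: finv_Cons)
    show "reduced (inv_letter b # [inv_letter a])" using 1(2) by auto
  qed
  then show ?case by (simp add: finv_Cons)
qed (auto simp: finv_def)

lemma set_finv: "set (finv p) = inv_letter ` set p"
  by (simp add: finv_def)

lemma F_red: "\<forall>a\<in>set p. fst a < n \<Longrightarrow> red p \<in> F n"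
  using set_red[of p] reduced_red[of p] by (auto simp: F_def)

lemma E_letters: "\<forall>a\<in>set p. fst a < n \<and> (\<forall>b\<in>set (z (fst a)). fst b < n) \<Longrightarrow>
   \<forall>b\<in>set (E z p). fst b < n"
proof (induction p)
  case (Cons a p)
  then show ?case by (auto simp: E_Cons img_def set_finv)
qed simp

lemma E_length: "\<forall>a\<in>set p. length (z (fst a)) \<le> W \<Longrightarrow> length (E z p) \<le> length p * W"
  by (induction p) (auto simp: E_Cons img_def)

lemma wlen_eval: "basis n y \<Longrightarrow> p \<in> F n \<Longrightarrow> wlen n y (eval y p) = length p"
proof -
  assume b: "basis n y" and p: "p \<in> F n"
  have inj: "inj_on (eval y) (F n)" using b by (simp add: basis_def bij_betw_def)
  have "(THE w. w \<in> F n \<and> eval y w = eval y p) = p"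
    by (rule the_equality) (use p inj in \<open>auto dest: inj_onD\<close>)
  then show ?thesis by (simp add: wlen_def)
qed

lemma conj_cancel: "red (finv v @ red (v @ X @ finv v) @ v) = red X"
proof -
  have "red (finv v @ red (v @ X @ finv v) @ v) = red ((finv v @ v) @ X @ (finv v @ v))"
    by (simp add: red_mid)
  also have "\<dots> = red (red (finv v @ v) @ X @ red (finv v @ v))"
    by (metis append_assoc red_right red_left)
  also have "\<dots> = red X" by (simp only: red_finv_left append_Nil append_Nil2 red_idem)
  finally show ?thesis .
qed

lemma red3: "red (a @ b @ c) = red (red a @ red b @ red c)"
  proof -
  have "red (a @ b @ c) = red (red a @ red (b @ c))" by (rule red_both)
  also have "red (b @ c) = red (red b @ red c)" by (rule red_both)
  finally show ?thesis by (metis append_assoc red_right)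
qed

theorem lemma2p3:
  fixes n :: nat and x y w :: "nat \<Rightarrow> word" and v :: word
  assumes "n \<ge> 2"
    and "basis n x" and "basis n y" and "basis n w"
    and "v \<in> F n"
    and "\<forall>i<n. x i = fmult v (fmult (w i) (finv v))"
  shows "wlen n y v \<le> (blen n y w)^2 * blen n x y"
proof -
  note n2 = assms(1) and bx = assms(2) and bY = assms(3) and bw = assms(4)
    and vF = assms(5) and conj = assms(6)
  let ?L = "blen n x y" and ?W = "blen n y w"
  have xF: "\<And>i. i < n \<Longrightarrow> x i \<in> F n" using bx by (simp add: basis_def)
  have yF: "\<And>i. i < n \<Longrightarrow> y i \<in> F n" using bY by (simp add: basis_def)
  have wF: "\<And>i. i < n \<Longrightarrow> w i \<in> F n" using bw by (simp add: basis_def)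
  have imx: "eval x ` F n = F n" using bx by (simp add: basis_def bij_betw_def)
  have imy: "eval y ` F n = F n" using bY by (simp add: basis_def bij_betw_def)
  have injy: "inj_on (eval y) (F n)" using bY by (simp add: basis_def bij_betw_def)
  obtain u where u: "u \<in> F n" "eval y u = v" using vF imy by (metis imageE)
  have wv: "wlen n y v = length u" using wlen_eval[OF bY u(1)] u(2) by simp
  have "\<forall>i. \<exists>p. i < n \<longrightarrow> p \<in> F n \<and> eval x p = y i"
    using yF imx by (metis imageE)
  then obtain P where P: "\<And>i. i < n \<Longrightarrow> P i \<in> F n \<and> eval x (P i) = y i" by metis
  have "\<forall>i. \<exists>p. i < n \<longrightarrow> p \<in> F n \<and> eval y p = w i"
    using wF imy by (metis imageE)
  then obtain Q where Q: "\<And>i. i < n \<Longrightarrow> Q i \<in> F n \<and> eval y (Q i) = w i" by metis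
  have PL: "length (P i) \<le> ?L" if i: "i < n" for i
  proof -
    have "finite {wlen n x (y i) | i. i < n}" by simp
    moreover have "wlen n x (y i) \<in> {wlen n x (y i) | i. i < n}" using i by blast
    ultimately have "wlen n x (y i) \<le> ?L" unfolding blen_def by (rule Max_ge)
    then show ?thesis using wlen_eval[OF bx, of "P i"] P[OF i] by simp
  qed
  have QW: "length (Q i) \<le> ?W" if i: "i < n" for i
  proof -
    have "finite {wlen n y (w i) | i. i < n}" by simp
    moreover have "wlen n y (w i) \<in> {wlen n y (w i) | i. i < n}" using i by blast
    ultimately have "wlen n y (w i) \<le> ?W" unfolding blen_def by (rule Max_ge)
    then show ?thesis using wlen_eval[OF bY, of "Q i"] Q[OF i] by simp
  qed
  have vred: "red v = v" using vF by (simp add: F_def red_reduced)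
  have vE: "red (E y u) = v" using u(2) by (simp add: eval_E)
  have key: "length (red (finv u @ [(i,False)] @ u)) \<le> ?L * ?W" if i: "i < n" for i
  proof -
    define R where "R = E Q (P i)"
    have Pl: "\<forall>a\<in>set (P i). fst a < n" using P[OF i] by (simp add: F_def)
    have xj: "\<forall>a\<in>set (P i). red (x (fst a)) = red (v @ w (fst a) @ finv v)"
    proof
      fix a assume "a \<in> set (P i)"
      then have j: "fst a < n" using Pl by blast
      have "red (x (fst a)) = x (fst a)" using xF[OF j] by (simp add: F_def red_reduced)
      also have "\<dots> = fmult v (fmult (w (fst a)) (finv v))" using conj j by blast
      finally have "red (x (fst a)) = red (v @ red (fmult (w (fst a)) (finv v)))"
        by (metis red_fmult red_right red_idem)
      also have "\<dots> = red (v @ red (w (fst a) @ finv v))" by (simp add: red_fmult)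
      finally show "red (x (fst a)) = red (v @ w (fst a) @ finv v)" by (simp add: red_right)
    qed
    have wj: "\<forall>a\<in>set (P i). red (w (fst a)) = red (E y (Q (fst a)))"
    proof
      fix a assume "a \<in> set (P i)"
      then have j: "fst a < n" using Pl by blast
      have "red (w (fst a)) = w (fst a)" using wF[OF j] by (simp add: F_def red_reduced)
      then show "red (w (fst a)) = red (E y (Q (fst a)))" using Q[OF j] by (simp add: eval_E)
    qed
    have "y i = red (E x (P i))" using P[OF i] by (simp add: eval_E)
    also have "\<dots> = red (E (\<lambda>j. v @ w j @ finv v) (P i))" by (rule E_resp[OF xj])
    also have "\<dots> = red (v @ E w (P i) @ finv v)" by (rule E_conj)
    also have "\<dots> = red (v @ red (E w (P i)) @ finv v)" by (simp add: red_mid)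
    also have "red (E w (P i)) = red (E (\<lambda>j. E y (Q j)) (P i))" by (rule E_resp[OF wj])
    also have "\<dots> = red (E y R)" by (simp add: R_def E_comp)
    finally have yi: "y i = red (v @ E y R @ finv v)" by (simp add: red_mid)
    have "eval y (finv u @ [(i,False)] @ u) = red (finv (E y u) @ y i @ E y u)"
      by (simp add: eval_E E_append E_finv E_Cons img_def)
    also have "\<dots> = red (red (finv (E y u)) @ red (y i) @ red (E y u))" by (rule red3)
    also have "\<dots> = red (red (finv v) @ red (y i) @ red v)"
      using vE vred red_finv_red[of "E y u"] by simp
    also have "\<dots> = red (finv v @ y i @ v)" by (rule red3[symmetric])
    also have "\<dots> = red (E y R)" using yi conj_cancel by simp
    also have "\<dots> = eval y R" by (simp add: eval_E)
    finally have ev: "eval y (red (finv u @ [(i,False)] @ u)) = eval y (red R)"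
      by (simp add: eval_red)
    have uL: "\<forall>a\<in>set u. fst a < n" using u(1) by (simp add: F_def)
    have T: "red (finv u @ [(i,False)] @ u) \<in> F n"
      by (rule F_red) (use uL i in \<open>auto simp: set_finv\<close>)
    have "\<forall>b\<in>set (E Q (P i)). fst b < n"
      by (rule E_letters) (use Pl Q in \<open>auto simp: F_def\<close>)
    then have RF: "red R \<in> F n" unfolding R_def by (rule F_red)
    have eq: "red (finv u @ [(i,False)] @ u) = red R"
      using injy T RF ev by (meson inj_onD)
    have "length R \<le> length (P i) * ?W" unfolding R_def
      by (rule E_length) (use Pl QW in auto)
    also have "\<dots> \<le> ?L * ?W" using PL[OF i] by simp
    finally show ?thesis using eq length_red[of R] by simp
  qed
  show ?thesis
  proof (cases u)
    case Nil then show ?thesis using wv by simp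
  next
    case (Cons c u')
    define i where "i = (if fst c = 0 then 1 else (0::nat))"
    have i: "i < n" "i \<noteq> fst c" using n2 by (auto simp: i_def)
    have ured: "reduced u" using u(1) by (simp add: F_def)
    have r1: "reduced (finv u' @ [inv_letter c])"
      using reduced_finv[OF ured] Cons by (simp add: finv_Cons)
    have r2: "reduced ((finv u' @ [inv_letter c]) @ [(i,False)])"
      proof -
      have "(i,False) \<noteq> c" using i(2) by auto
      then show ?thesis using reduced_app[OF r1, of "[(i,False)]"] by (simp add: inv_letter_def)
    qed
    have r3: "reduced ((i,False) # u)" using ured Cons i by (cases c) (simp add: inv_letter_def)
    have "reduced ((finv u' @ [inv_letter c]) @ (i,False) # u)"
      by (rule reduced_app[OF r2 r3])
    then have "reduced (finv u @ [(i,False)] @ u)" using Cons by (simp add: finv_Cons)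
    then have "2 * length u + 1 \<le> ?L * ?W" using key[OF i(1)] by (simp add: red_reduced)
    moreover have "length u \<le> 2 * length u + 1" by simp
    moreover have "?W \<ge> 1" using calculation by (metis One_nat_def add_is_0 le_zero_eq less_one mult_0_right not_le)
    ultimately have "length u \<le> ?L * ?W" by linarith
    also have "\<dots> \<le> ?W ^ 2 * ?L" using \<open>?W \<ge> 1\<close> by (simp add: power2_eq_square)
    finally show ?thesis using wv by simp
  qed
qed

end
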